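(* Let $m$ be an integer with $m\ge 1$ or $m\le -2$, let $T_j(z,w)=w^jS_j(z/w)$, and let \[F=\left[(xyw-u^2z)w^{2m}+(xyzw+4u^2w^2-x^2w^2-y^2w^2-u^2z^2)T_mT_{m-1}\right]T_{m-1}-u^2w^{2m}T_m,\] defining $S=\{F=0\}\subset\mathbb P^2(x:y:u)\times\mathbb P^1(z:w)$. The singular points $(x:y:u,z:w)$ of $S$ are: $(1:0:0,1:0)$ and $(0:1:0,1:0)$; $(1:0:0,z:1)$ and $(0:1:0,z:1)$ where $z$ is a root of $S_{m-1}(z)$; $(1:1:0,z:1)$ where $z$ is a root of $S_m(z)-S_{m-1}(z)$; $(1:-1:0,z:1)$ where $z$ is a root of $S_m(z)+S_{m-1}(z)$. The number of singularities is $4m$ if $m\ge1$, and $-(2+4m)$ if $m\le -2$.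
   Context: The Chebyshev polynomials $S_j(\omega)$ are defined for all integers $j$ by $S_0=1$, $S_1=\omega$, $S_{j+1}=\omega S_j-S_{j-1}$. $S$ is the projective closure of the natural model of the canonical component of the $\mathrm{SL}_2(\mathbb C)$ character variety of the double twist link $J(3,2m+1)$, whose affine equation is $tS_{m-1}(z)-S_m(z)=0$ with $t=xy-z+(xyz+4-x^2-y^2-z^2)S_m(z)S_{m-1}(z)$. *)

theory Defs
  imports "HOL-Analysis.Analysis"
begin

fun chebN :: "nat \<Rightarrow> complex \<Rightarrow> complex" where
  "chebN 0 w = 1"
| "chebN (Suc 0) w = w"
| "chebN (Suc (Suc n)) w = w * chebN (Suc n) w - chebN n w"

text \<open>S_j for all integers j, extending S_{j+1} = w S_j - S_{j-1} backwards:
  S_{-1} = 0 and S_{-n} = - S_{n-2} for n \<ge> 2.\<close>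
definition chebS :: "int \<Rightarrow> complex \<Rightarrow> complex" where
  "chebS j w = (if 0 \<le> j then chebN (nat j) w
                else if j = -1 then 0 else - chebN (nat (-j - 2)) w)"

text \<open>Homogenised Chebyshev polynomials: H_n(z,w) = w^n S_n(z/w) for n \<ge> 0,
  i.e. H_0 = 1, H_1 = z, H_{n+2} = z H_{n+1} - w^2 H_n.\<close>
fun chebH :: "nat \<Rightarrow> complex \<Rightarrow> complex \<Rightarrow> complex" where
  "chebH 0 z w = 1"
| "chebH (Suc 0) z w = z"
| "chebH (Suc (Suc n)) z w = z * chebH (Suc n) z w - w\<^sup>2 * chebH n z w"

definition Qform :: "complex \<Rightarrow> complex \<Rightarrow> complex \<Rightarrow> complex \<Rightarrow> complex \<Rightarrow> complex" where
  "Qform x y u z w = x*y*z*w + 4*u\<^sup>2*w\<^sup>2 - x\<^sup>2*w\<^sup>2 - y\<^sup>2*w\<^sup>2 - u\<^sup>2*z\<^sup>2"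

text \<open>For m = -n \<le> -2, T_m = -w^{2-2n} H_{n-2} and T_{m-1} = -w^{-2n} H_{n-1} are Laurent in w;
  the paper's expression is then w^{2-6n} times the polynomial below (denominators cleared
  by the minimal power of w; the result is not divisible by w), whose zero set is the
  projective closure of the affine surface.\<close>
definition Fpoly :: "int \<Rightarrow> complex \<Rightarrow> complex \<Rightarrow> complex \<Rightarrow> complex \<Rightarrow> complex \<Rightarrow> complex" where
  "Fpoly m x y u z w =
    (if 1 \<le> m then
       let Tm = chebH (nat m) z w; Tm1 = chebH (nat (m - 1)) z w in
       ((x*y*w - u\<^sup>2*z) * w ^ (2 * nat m) + Qform x y u z w * Tm * Tm1) * Tm1
         - u\<^sup>2 * w ^ (2 * nat m) * Tm
     else
       let n = nat (-m); Ha = chebH (n - 2) z w; Hb = chebH (n - 1) z w in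
       - (x*y*w - u\<^sup>2*z) * w ^ (2*n - 2) * Hb
         - Qform x y u z w * Ha * Hb\<^sup>2
         + u\<^sup>2 * w ^ (2*n) * Ha)"

definition is_singular :: "int \<Rightarrow> complex \<Rightarrow> complex \<Rightarrow> complex \<Rightarrow> complex \<Rightarrow> complex \<Rightarrow> bool" where
  "is_singular m x y u z w \<longleftrightarrow>
     Fpoly m x y u z w = 0 \<and>
     deriv (\<lambda>t. Fpoly m t y u z w) x = 0 \<and>
     deriv (\<lambda>t. Fpoly m x t u z w) y = 0 \<and>
     deriv (\<lambda>t. Fpoly m x y t z w) u = 0 \<and>
     deriv (\<lambda>t. Fpoly m x y u t w) z = 0 \<and>
     deriv (\<lambda>t. Fpoly m x y u z t) w = 0"

text \<open>A point (x:y:u, z:w) of P^2 x P^1, represented as its set of representatives.\<close>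
definition proj_pt :: "complex \<times> complex \<times> complex \<Rightarrow> complex \<times> complex
      \<Rightarrow> ((complex \<times> complex \<times> complex) \<times> (complex \<times> complex)) set" where
  "proj_pt p q = (case p of (x, y, u) \<Rightarrow> case q of (z, w) \<Rightarrow>
     {((a*x, a*y, a*u), (b*z, b*w)) | a b. a \<noteq> 0 \<and> b \<noteq> 0})"

definition singular_points :: "int \<Rightarrow> ((complex \<times> complex \<times> complex) \<times> (complex \<times> complex)) set set" where
  "singular_points m = {proj_pt (x, y, u) (z, w) | x y u z w.
      (x, y, u) \<noteq> (0, 0, 0) \<and> (z, w) \<noteq> (0, 0) \<and> is_singular m x y u z w}"

end

theory Submission
  imports Defs "HOL-Computational_Algebra.Fundamental_Theorem_Algebra"
begin

fun chebHz :: "nat \<Rightarrow> complex \<Rightarrow> complex \<Rightarrow> complex" where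
  "chebHz 0 z w = 0"
| "chebHz (Suc 0) z w = 1"
| "chebHz (Suc (Suc n)) z w = chebH (Suc n) z w + z * chebHz (Suc n) z w - w\<^sup>2 * chebHz n z w"

fun chebHw :: "nat \<Rightarrow> complex \<Rightarrow> complex \<Rightarrow> complex" where
  "chebHw 0 z w = 0"
| "chebHw (Suc 0) z w = 0"
| "chebHw (Suc (Suc n)) z w = z * chebHw (Suc n) z w - 2 * w * chebH n z w - w\<^sup>2 * chebHw n z w"

lemma chebH_dz: "((\<lambda>t. chebH n t w) has_field_derivative chebHz n z w) (at z)"
proof (induction n z w rule: chebHz.induct)
  case (3 n z w)
  show ?case
    by (simp only: chebH.simps chebHz.simps) (auto intro!: derivative_eq_intros 3)
qed auto

lemma chebH_dw: "((\<lambda>t. chebH n z t) has_field_derivative chebHw n z w) (at w)"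
proof (induction n z w rule: chebHw.induct)
  case (3 n z w)
  show ?case
    by (simp only: chebH.simps chebHw.simps) (auto intro!: derivative_eq_intros 3)
qed auto

lemma cassini: "chebH (Suc n) z w ^ 2 - z * chebH (Suc n) z w * chebH n z w + w^2 * chebH n z w ^ 2 = w ^ (2 * Suc n)"
proof (induction n)
  case 0 then show ?case by (simp add: power2_eq_square)
next
  case (Suc n)
  have "chebH (Suc (Suc n)) z w ^ 2 - z * chebH (Suc (Suc n)) z w * chebH (Suc n) z w + w^2 * chebH (Suc n) z w ^ 2
     = w^2 * (chebH (Suc n) z w ^ 2 - z * chebH (Suc n) z w * chebH n z w + w^2 * chebH n z w ^ 2)"
    by (simp add: algebra_simps power2_eq_square)
  also have "\<dots> = w ^ (2 * Suc (Suc n))" using Suc by (simp add: power_add power2_eq_square)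
  finally show ?case .
qed

lemma chebH_add: "chebH (a + b + 2) z w = chebH (a+1) z w * chebH (b+1) z w - w^2 * chebH a z w * chebH b z w"
proof (induction b rule: less_induct)
  case (less b)
  show ?case
  proof (cases b)
    case 0 then show ?thesis by simp
  next
    case (Suc b1)
    show ?thesis
    proof (cases b1)
      case 0 then show ?thesis using Suc by (simp add: algebra_simps power2_eq_square)
    next
      case (Suc b2)
      have i1: "chebH (a + b1 + 2) z w = chebH (a+1) z w * chebH (b1+1) z w - w^2 * chebH a z w * chebH b1 z w"
        using less \<open>b = Suc b1\<close> by auto
      have i2: "chebH (a + b2 + 2) z w = chebH (a+1) z w * chebH (b2+1) z w - w^2 * chebH a z w * chebH b2 z w"
        using less \<open>b = Suc b1\<close> Suc by auto
      have e1: "a + b + 2 = Suc (Suc (a + b2 + 2))" using Suc \<open>b = Suc b1\<close> by simp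
      have e2: "a + b1 + 2 = Suc (a + b2 + 2)" using Suc by simp
      have "chebH (a + b + 2) z w = z * chebH (a + b1 + 2) z w - w^2 * chebH (a + b2 + 2) z w"
        by (simp only: e1 e2 chebH.simps)
      also have "\<dots> = chebH (a+1) z w * (z * chebH (b1+1) z w - w^2 * chebH (b2+1) z w)
          - w^2 * chebH a z w * (z * chebH b1 z w - w^2 * chebH b2 z w)"
        unfolding i1 i2 by (simp add: algebra_simps)
      also have "\<dots> = chebH (a+1) z w * chebH (b+1) z w - w^2 * chebH a z w * chebH b z w"
        using Suc \<open>b = Suc b1\<close> by simp
      finally show ?thesis .
    qed
  qed
qed

lemma dz_ident: "(4*w^2 - z^2) * chebHz (Suc n) z w = - of_nat (Suc n) * z * chebH (Suc n) z w + 2 * of_nat (n+2) * w^2 * chebH n z w"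
proof (induction n rule: less_induct)
  case (less n)
  show ?case
  proof (cases n)
    case 0 then show ?thesis by (simp add: algebra_simps power2_eq_square)
  next
    case (Suc n1)
    show ?thesis
    proof (cases n1)
      case 0 then show ?thesis using Suc by (simp add: algebra_simps power2_eq_square)
    next
      case (Suc n2)
      have i1: "(4*w^2 - z^2) * chebHz (Suc n1) z w = - of_nat (Suc n1) * z * chebH (Suc n1) z w + 2 * of_nat (n1+2) * w^2 * chebH n1 z w"
        using less \<open>n = Suc n1\<close> by auto
      have i2: "(4*w^2 - z^2) * chebHz (Suc n2) z w = - of_nat (Suc n2) * z * chebH (Suc n2) z w + 2 * of_nat (n2+2) * w^2 * chebH n2 z w"
        using less \<open>n = Suc n1\<close> Suc by auto
      have r1: "chebH (Suc (Suc n)) z w = z * chebH (Suc n) z w - w^2 * chebH n z w" by simp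
      have r2: "chebH (Suc n) z w = z * chebH n z w - w^2 * chebH n1 z w" using Suc \<open>n = Suc n1\<close> by simp
      have r3: "chebH n z w = z * chebH n1 z w - w^2 * chebH n2 z w" using Suc \<open>n = Suc n1\<close> by simp
      have d: "chebHz (Suc (Suc n1)) z w = chebH (Suc n1) z w + z * chebHz (Suc n1) z w - w^2 * chebHz n1 z w" by simp
      have "(4*w^2 - z^2) * chebHz (Suc n) z w = (4*w^2 - z^2) * chebH (Suc n1) z w + z * ((4*w^2 - z^2) * chebHz (Suc n1) z w) - w^2 * ((4*w^2 - z^2) * chebHz (Suc n2) z w)"
        unfolding \<open>n = Suc n1\<close> Suc d by (simp add: algebra_simps)
      also have "\<dots> = - of_nat (Suc n) * z * chebH (Suc n) z w + 2 * of_nat (n+2) * w^2 * chebH n z w"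
        unfolding i1 i2 r2 r3 using \<open>n = Suc n1\<close> Suc
        by (simp add: algebra_simps power2_eq_square)
      finally show ?thesis .
    qed
  qed
qed

lemma simple_root:
  assumes "w \<noteq> 0" "chebH k z w = 0" shows "chebHz k z w \<noteq> 0"
proof
  assume d: "chebHz k z w = 0"
  show False
  proof (cases k)
    case 0 then show False using assms by simp
  next
    case (Suc n)
    have "0 = 2 * of_nat (n+2) * w^2 * chebH n z w"
      using dz_ident[of w z n] d assms Suc by simp
    moreover have nz: "(of_nat (n+2)::complex) \<noteq> 0" by (simp only: of_nat_eq_0_iff)
    ultimately have "chebH n z w = 0" using assms by (metis mult_eq_0_iff power_eq_0_iff zero_neq_numeral)
    then show False using cassini[of n z w] assms Suc by simp
  qed
qed

lemma chebH_w0: "chebH k z 0 = z ^ k"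
  by (induction k z "0::complex" rule: chebH.induct) auto

lemma chebN_H: "chebN n z = chebH n z 1"
  by (induction n z rule: chebN.induct) auto

lemma chebH_homog: "chebH n (c*z) (c*w) = c^n * chebH n z w"
  by (induction n z w rule: chebH.induct) (auto simp: algebra_simps power2_eq_square)

lemma chebH_double: "chebH (2*k+2) z w = chebH (Suc k) z w ^ 2 - w^2 * chebH k z w ^ 2"
  using chebH_add[of k k z w] by (simp add: power2_eq_square mult_2)

lemma chebH_odd: "chebH (2*k+1) z w = 2 * chebH (Suc k) z w * chebH k z w - z * chebH k z w ^ 2"
proof (cases k)
  case 0 then show ?thesis by simp
next
  case (Suc k1)
  have "chebH (2*k+1) z w = chebH (k1+1) z w * chebH (Suc k1 + 1) z w - w^2 * chebH k1 z w * chebH (Suc k1) z w"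
    using chebH_add[of k1 "Suc k1" z w] Suc by (simp add: mult_2)
  moreover have "chebH (Suc k) z w = z * chebH k z w - w^2 * chebH k1 z w" using Suc by simp
  ultimately show ?thesis using Suc by (simp add: algebra_simps power2_eq_square)
qed

lemma chebH_triple_pos:
  "chebH (3*k+3) z w = chebH (Suc k) z w ^ 3 - 3 * w^2 * chebH (Suc k) z w * chebH k z w ^ 2 + z * w^2 * chebH k z w ^ 3"
proof -
  have i: "3*k+3 = (2*k+1)+k+2" by simp
  have "chebH (3*k+3) z w = chebH ((2*k+1)+k+2) z w" by (simp only: i)
  also have "\<dots> = chebH (2*k+1+1) z w * chebH (k+1) z w - w^2 * chebH (2*k+1) z w * chebH k z w"
    by (rule chebH_add)
  also have "\<dots> = chebH (2*k+2) z w * chebH (Suc k) z w - w^2 * chebH (2*k+1) z w * chebH k z w"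
    by (simp only: Suc_eq_plus1 add.assoc one_add_one)
  also have "\<dots> = chebH (Suc k) z w ^ 3 - 3 * w^2 * chebH (Suc k) z w * chebH k z w ^ 2 + z * w^2 * chebH k z w ^ 3"
    by (simp only: chebH_double chebH_odd) (simp add: algebra_simps power2_eq_square power3_eq_cube)
  finally show ?thesis .
qed

lemma chebH_triple_neg:
  "chebH (3*j+4) z w = z * chebH (Suc j) z w ^ 3 - 3 * w^2 * chebH j z w * chebH (Suc j) z w ^ 2 + w^4 * chebH j z w ^ 3"
proof -
  have i: "3*j+4 = (2*j+1)+(Suc j)+2" by simp
  have r: "chebH (Suc j + 1) z w = z * chebH (Suc j) z w - w^2 * chebH j z w" by simp
  have "chebH (3*j+4) z w = chebH ((2*j+1)+(Suc j)+2) z w" by (simp only: i)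
  also have "\<dots> = chebH (2*j+1+1) z w * chebH (Suc j+1) z w - w^2 * chebH (2*j+1) z w * chebH (Suc j) z w"
    by (rule chebH_add)
  also have "\<dots> = chebH (2*j+2) z w * (z * chebH (Suc j) z w - w^2 * chebH j z w) - w^2 * chebH (2*j+1) z w * chebH (Suc j) z w"
    by (simp only: r add.assoc one_add_one)
  also have "\<dots> = z * chebH (Suc j) z w ^ 3 - 3 * w^2 * chebH j z w * chebH (Suc j) z w ^ 2 + w^4 * chebH j z w ^ 3"
    by (simp only: chebH_double chebH_odd) (simp add: algebra_simps power2_eq_square power3_eq_cube power4_eq_xxxx)
  finally show ?thesis .
qed

definition Phi :: "complex \<Rightarrow> complex \<Rightarrow> bool \<Rightarrow> nat \<Rightarrow> nat \<Rightarrow> complex \<Rightarrow> complex \<Rightarrow> complex \<Rightarrow> complex \<Rightarrow> complex \<Rightarrow> complex" where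
  "Phi \<sigma> \<tau> kf i N x y u z w =
     \<sigma> * w * (if kf then chebH (Suc i) z w else chebH i z w)
       * (x * chebH (Suc i) z w - y * w * chebH i z w) * (y * chebH (Suc i) z w - x * w * chebH i z w)
     + \<tau> * u^2 * chebH N z w"

lemma alg_pos:
  fixes P R W H x y u z w :: complex
  assumes "W = P^2 - z*P*R + w^2*R^2" "H = P^3 - 3*w^2*P*R^2 + z*w^2*R^3"
  shows "((x*y*w - u\<^sup>2*z) * W + Qform x y u z w * P * R) * R - u\<^sup>2 * W * P
     = 1 * w * R * (x * P - y * w * R) * (y * P - x * w * R) + -1 * u^2 * H"
  unfolding assms Qform_def by algebra

lemma alg_neg:
  fixes P R V H x y u z w :: complex
  assumes "V = P^2 - z*P*R + w^2*R^2" "H = z * P^3 - 3*w^2*R*P^2 + w^4*R^3"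
  shows "- (x*y*w - u\<^sup>2*z) * V * P - Qform x y u z w * R * P\<^sup>2 + u\<^sup>2 * (w^2 * V) * R
     = -1 * w * P * (x * P - y * w * R) * (y * P - x * w * R) + 1 * u^2 * H"
  unfolding assms Qform_def by algebra

lemma Fpoly_pos:
  assumes "1 \<le> m" "k = nat m - 1"
  shows "Fpoly m x y u z w = Phi 1 (-1) False k (3 * k + 3) x y u z w"
proof -
  have nm: "nat m = Suc k" "nat (m - 1) = k" using assms by auto
  show ?thesis
    unfolding Fpoly_def Phi_def Let_def using assms
    apply (simp only: nm if_True if_False)
    apply (rule alg_pos)
    using cassini[of k z w] chebH_triple_pos[of k z w] by (auto simp: nm)
qed

lemma Fpoly_neg:
  assumes "m \<le> -2" "j = nat (-m) - 2"
  shows "Fpoly m x y u z w = Phi (-1) 1 True j (3 * j + 4) x y u z w"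
proof -
  have nm: "nat (-m) - 2 = j" "nat (-m) - 1 = Suc j" 
    using assms by auto
  have "2 * nat (-m) - 2 = 2 * Suc j" using assms by auto
  then have e1: "w ^ (2 * nat (-m) - 2) = w ^ (2 * Suc j)" by simp
  have "2 * nat (-m) = 2 + 2 * Suc j" using assms by auto
  then have e2: "w ^ (2 * nat (-m)) = w^2 * w ^ (2 * Suc j)" by (simp only: power_add)
  have ng: "\<not> 1 \<le> m" using assms by simp
  show ?thesis
    unfolding Fpoly_def Phi_def Let_def
    apply (simp only: ng nm e1 e2 if_True if_False)
    apply (rule alg_neg)
    using cassini[of j z w] chebH_triple_neg[of j z w] by auto
qed

definition Kf :: "bool \<Rightarrow> nat \<Rightarrow> complex \<Rightarrow> complex \<Rightarrow> complex" where
  "Kf kf i z w = (if kf then chebH (Suc i) z w else chebH i z w)"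
definition Kfz :: "bool \<Rightarrow> nat \<Rightarrow> complex \<Rightarrow> complex \<Rightarrow> complex" where
  "Kfz kf i z w = (if kf then chebHz (Suc i) z w else chebHz i z w)"
definition Kfw :: "bool \<Rightarrow> nat \<Rightarrow> complex \<Rightarrow> complex \<Rightarrow> complex" where
  "Kfw kf i z w = (if kf then chebHw (Suc i) z w else chebHw i z w)"

lemma Kf_dz: "((\<lambda>t. Kf kf i t w) has_field_derivative Kfz kf i z w) (at z)"
  unfolding Kf_def Kfz_def by (cases kf) (auto intro: chebH_dz)
lemma Kf_dw: "((\<lambda>t. Kf kf i z t) has_field_derivative Kfw kf i z w) (at w)"
  unfolding Kf_def Kfw_def by (cases kf) (auto intro: chebH_dw)

lemma Phi_alt: "Phi \<sigma> \<tau> kf i N x y u z w =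
     \<sigma> * w * Kf kf i z w
       * (x * chebH (Suc i) z w - y * w * chebH i z w) * (y * chebH (Suc i) z w - x * w * chebH i z w)
     + \<tau> * u^2 * chebH N z w"
  unfolding Phi_def Kf_def by simp

lemmas chebH_dz' = DERIV_chain2[OF chebH_dz]
lemmas chebH_dw' = DERIV_chain2[OF chebH_dw]
lemmas Kf_dz' = DERIV_chain2[OF Kf_dz]
lemmas Kf_dw' = DERIV_chain2[OF Kf_dw]

lemma Phi_dx: "deriv (\<lambda>t. Phi \<sigma> \<tau> kf i N t y u z w) x =
   \<sigma> * w * Kf kf i z w * (chebH (Suc i) z w * (y * chebH (Suc i) z w - x * w * chebH i z w)
       - w * chebH i z w * (x * chebH (Suc i) z w - y * w * chebH i z w))"
  unfolding Phi_alt
  apply (rule DERIV_imp_deriv)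
  apply (auto intro!: derivative_eq_intros)
  apply (simp add: algebra_simps)
  done

lemma Phi_dy: "deriv (\<lambda>t. Phi \<sigma> \<tau> kf i N x t u z w) y =
   \<sigma> * w * Kf kf i z w * (chebH (Suc i) z w * (x * chebH (Suc i) z w - y * w * chebH i z w)
       - w * chebH i z w * (y * chebH (Suc i) z w - x * w * chebH i z w))"
  unfolding Phi_alt
  apply (rule DERIV_imp_deriv)
  apply (auto intro!: derivative_eq_intros)
  apply (simp add: algebra_simps)
  done

lemma Phi_du: "deriv (\<lambda>t. Phi \<sigma> \<tau> kf i N x y t z w) u = 2 * \<tau> * u * chebH N z w"
  unfolding Phi_alt
  apply (rule DERIV_imp_deriv)
  apply (auto intro!: derivative_eq_intros)
  done

lemma Phi_dz: "deriv (\<lambda>t. Phi \<sigma> \<tau> kf i N x y u t w) z =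
   \<sigma> * w * (Kfz kf i z w * (x * chebH (Suc i) z w - y * w * chebH i z w) * (y * chebH (Suc i) z w - x * w * chebH i z w)
     + Kf kf i z w * (x * chebHz (Suc i) z w - y * w * chebHz i z w) * (y * chebH (Suc i) z w - x * w * chebH i z w)
     + Kf kf i z w * (x * chebH (Suc i) z w - y * w * chebH i z w) * (y * chebHz (Suc i) z w - x * w * chebHz i z w))
   + \<tau> * u^2 * chebHz N z w"
  unfolding Phi_alt
  apply (rule DERIV_imp_deriv)
  apply (auto intro!: derivative_eq_intros chebH_dz' Kf_dz')
  apply (simp add: algebra_simps)
  done

lemma Phi_dw: "deriv (\<lambda>t. Phi \<sigma> \<tau> kf i N x y u z t) w =
   \<sigma> * (Kf kf i z w * (x * chebH (Suc i) z w - y * w * chebH i z w) * (y * chebH (Suc i) z w - x * w * chebH i z w)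
     + w * Kfw kf i z w * (x * chebH (Suc i) z w - y * w * chebH i z w) * (y * chebH (Suc i) z w - x * w * chebH i z w)
     + w * Kf kf i z w * (x * chebHw (Suc i) z w - y * chebH i z w - y * w * chebHw i z w) * (y * chebH (Suc i) z w - x * w * chebH i z w)
     + w * Kf kf i z w * (x * chebH (Suc i) z w - y * w * chebH i z w) * (y * chebHw (Suc i) z w - x * chebH i z w - x * w * chebHw i z w))
   + \<tau> * u^2 * chebHw N z w"
  unfolding Phi_alt
  apply (rule DERIV_imp_deriv)
  apply (auto intro!: derivative_eq_intros chebH_dw' Kf_dw')
  apply (simp add: algebra_simps)
  done

definition singPhi :: "complex \<Rightarrow> complex \<Rightarrow> bool \<Rightarrow> nat \<Rightarrow> nat \<Rightarrow> complex \<Rightarrow> complex \<Rightarrow> complex \<Rightarrow> complex \<Rightarrow> complex \<Rightarrow> bool" where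
  "singPhi \<sigma> \<tau> kf i N x y u z w \<longleftrightarrow>
     Phi \<sigma> \<tau> kf i N x y u z w = 0 \<and>
     deriv (\<lambda>t. Phi \<sigma> \<tau> kf i N t y u z w) x = 0 \<and>
     deriv (\<lambda>t. Phi \<sigma> \<tau> kf i N x t u z w) y = 0 \<and>
     deriv (\<lambda>t. Phi \<sigma> \<tau> kf i N x y t z w) u = 0 \<and>
     deriv (\<lambda>t. Phi \<sigma> \<tau> kf i N x y u t w) z = 0 \<and>
     deriv (\<lambda>t. Phi \<sigma> \<tau> kf i N x y u z t) w = 0"

lemma Kf_cases: "Kf kf i z w = chebH (Suc i) z w \<or> Kf kf i z w = chebH i z w"
  unfolding Kf_def by auto

lemma Kf_simple: "w \<noteq> 0 \<Longrightarrow> Kf kf i z w = 0 \<Longrightarrow> Kfz kf i z w \<noteq> 0"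
  unfolding Kf_def Kfz_def by (cases kf) (auto dest: simple_root)

lemma cassini_nz: "w \<noteq> 0 \<Longrightarrow> chebH (Suc i) z w = 0 \<Longrightarrow> chebH i z w = 0 \<Longrightarrow> False"
  using cassini[of i z w] by simp

lemma sq_eq_cases:
  fixes x y P r :: complex
  assumes "x * P = y * r" "y * P = x * r" "x \<noteq> 0 \<or> y \<noteq> 0"
  shows "P = r \<or> P = - r"
proof -
  have "x * (P^2 - r^2) = 0" "y * (P^2 - r^2) = 0"
    using assms(1,2) by (simp_all add: algebra_simps power2_eq_square)
  then have "P^2 = r^2" using assms(3) by auto
  then show ?thesis by (simp add: power2_eq_iff)
qed

lemma core_sub:
  assumes st: "\<sigma> \<noteq> 0" "\<tau> \<noteq> 0"
  and Nh: "\<And>z w. w \<noteq> 0 \<Longrightarrow> chebH N z w = 0 \<Longrightarrow> Kf kf i z w \<noteq> 0 \<and>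
              chebH (Suc i) z w \<noteq> w * chebH i z w \<and> chebH (Suc i) z w \<noteq> - (w * chebH i z w)"
  and nz: "(x,y,u) \<noteq> (0,0,0)" "(z,w) \<noteq> (0,0)"
  and s: "singPhi \<sigma> \<tau> kf i N x y u z w"
  shows "u = 0 \<and> ((w = 0 \<and> (x = 0 \<or> y = 0)) \<or> (w \<noteq> 0 \<and> Kf kf i z w = 0 \<and> (x = 0 \<or> y = 0))
     \<or> (w \<noteq> 0 \<and> chebH (Suc i) z w = w * chebH i z w \<and> x = y)
     \<or> (w \<noteq> 0 \<and> chebH (Suc i) z w = - (w * chebH i z w) \<and> x = - y))"
proof -
  define P where "P = chebH (Suc i) z w"
  define R where "R = chebH i z w"
  define K where "K = Kf kf i z w"
  define H where "H = chebH N z w"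
  define L1 where "L1 = x * P - y * w * R"
  define L2 where "L2 = y * P - x * w * R"
  have e0: "\<sigma> * w * K * L1 * L2 + \<tau> * u^2 * H = 0"
    using s unfolding singPhi_def Phi_alt P_def R_def K_def H_def L1_def L2_def by simp
  have ex: "\<sigma> * w * K * (P * L2 - w * R * L1) = 0"
    using s unfolding singPhi_def Phi_dx P_def R_def K_def H_def L1_def L2_def by simp
  have ey: "\<sigma> * w * K * (P * L1 - w * R * L2) = 0"
    using s unfolding singPhi_def Phi_dy P_def R_def K_def H_def L1_def L2_def by simp
  have eu: "2 * \<tau> * u * H = 0"
    using s unfolding singPhi_def Phi_du H_def by simp
  have ez: "\<sigma> * w * (Kfz kf i z w * L1 * L2
     + K * (x * chebHz (Suc i) z w - y * w * chebHz i z w) * L2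
     + K * L1 * (y * chebHz (Suc i) z w - x * w * chebHz i z w)) + \<tau> * u^2 * chebHz N z w = 0"
    using s unfolding singPhi_def Phi_dz P_def R_def K_def H_def L1_def L2_def by simp
  have ew: "\<sigma> * (K * L1 * L2 + w * Kfw kf i z w * L1 * L2
     + w * K * (x * chebHw (Suc i) z w - y * R - y * w * chebHw i z w) * L2
     + w * K * L1 * (y * chebHw (Suc i) z w - x * R - x * w * chebHw i z w)) + \<tau> * u^2 * chebHw N z w = 0"
    using s unfolding singPhi_def Phi_dw P_def R_def K_def H_def L1_def L2_def by simp
  have KPR: "K = P \<or> K = R" unfolding K_def P_def R_def using Kf_cases by blast
  have cas: "w \<noteq> 0 \<Longrightarrow> P = 0 \<Longrightarrow> R = 0 \<Longrightarrow> False" unfolding P_def R_def using cassini_nz by blast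
  have both: "L1 = 0 \<and> L2 = 0" if "w \<noteq> 0" "K \<noteq> 0" "L1 * L2 = 0"
  proof -
    have nz3: "\<sigma> * w * K \<noteq> 0" using st(1) that(1,2) by simp
    have a: "P * L2 = w * R * L1" using ex nz3 by (simp only: mult_eq_0_iff) (simp add: mult.assoc)
    have b: "P * L1 = w * R * L2" using ey nz3 by (simp only: mult_eq_0_iff) (simp add: mult.assoc)
    have PR: "\<not> (P = 0 \<and> w * R = 0)" using cas that(1) by (metis mult_eq_0_iff)
    show ?thesis
    proof (cases "L1 = 0")
      case True
      then have "P * L2 = 0" "w * R * L2 = 0" using a b by simp_all
      then have "L2 = 0" using PR by (metis mult_eq_0_iff)
      then show ?thesis using True by blast
    next
      case False
      then have "L2 = 0" using that(3) by simp
      then have "P * L1 = 0" "w * R * L1 = 0" using a b by simp_all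
      then have "L1 = 0" using PR by (metis mult_eq_0_iff)
      then show ?thesis using \<open>L2 = 0\<close> by blast
    qed
  qed
  have sq: "P = w * R \<or> P = - (w * R)" if "L1 = 0" "L2 = 0" "x \<noteq> 0 \<or> y \<noteq> 0"
    using sq_eq_cases[of x P y "w * R"] that unfolding L1_def L2_def by (simp add: algebra_simps)
  show ?thesis
  proof (cases "u = 0")
    case False
    then have H0: "H = 0" using eu st by simp
    have w0: "w \<noteq> 0"
    proof
      assume "w = 0"
      then have "z \<noteq> 0" using nz by simp
      then show False using H0 \<open>w = 0\<close> unfolding H_def by (simp add: chebH_w0)
    qed
    have NN: "K \<noteq> 0" "P \<noteq> w * R" "P \<noteq> - (w * R)"
      using Nh[OF w0 H0[unfolded H_def]] unfolding K_def P_def R_def by auto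
    have "\<sigma> * w * K * L1 * L2 = 0" using e0 H0 by simp
    then have "L1 * L2 = 0" using st(1) w0 NN(1) by simp
    then have "L1 = 0 \<and> L2 = 0" by (rule both[OF w0 NN(1)])
    then have L: "L1 = 0" "L2 = 0" by blast+
    have xy: "x = 0 \<and> y = 0" using sq[OF L] NN(2,3) by blast
    then have "\<tau> * u^2 * chebHz N z w = 0" using ez L by simp
    then have "chebHz N z w = 0" using st False by simp
    moreover have "chebH N z w = 0" using H0 H_def by simp
    ultimately show ?thesis using simple_root[OF w0] by blast
  next
    case True
    then have xy0: "x \<noteq> 0 \<or> y \<noteq> 0" using nz by blast
    show ?thesis
    proof (cases "w = 0")
      case True
      then have z0: "z \<noteq> 0" using nz by simp
      have "\<sigma> * K * L1 * L2 = 0" using ew \<open>u = 0\<close> True by simp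
      moreover have "K \<noteq> 0"
      proof -
        have "chebH (Suc i) z w \<noteq> 0" "chebH i z w \<noteq> 0" using z0 True by (simp_all add: chebH_w0)
        then show ?thesis using Kf_cases[of kf i z w] unfolding K_def by metis
      qed
      moreover have "P \<noteq> 0" using z0 True unfolding P_def by (simp add: chebH_w0)
      moreover have "L1 = x * P" "L2 = y * P" using True unfolding L1_def L2_def by simp_all
      ultimately have "x * y = 0" using st(1) by simp
      then show ?thesis using \<open>u = 0\<close> True by simp
    next
      case False
      have kl: "K * L1 * L2 = 0" using e0 \<open>u = 0\<close> False st(1) by simp
      show ?thesis
      proof (cases "K = 0")
        case True
        have "Kfz kf i z w * L1 * L2 = 0" using ez \<open>u = 0\<close> True False st(1) by simp
        moreover have "Kfz kf i z w \<noteq> 0" using Kf_simple[OF False] True unfolding K_def by blast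
        ultimately have LL: "L1 * L2 = 0" by simp
        have "P = 0 \<or> R = 0" using KPR True by metis
        moreover have "\<not> (P = 0 \<and> R = 0)" using cas False by blast
        ultimately have "(P = 0 \<and> R \<noteq> 0) \<or> (R = 0 \<and> P \<noteq> 0)" by blast
        then have "x = 0 \<or> y = 0"
        proof
          assume h: "P = 0 \<and> R \<noteq> 0"
          then have "L1 * L2 = (x * y) * (w * R)^2" unfolding L1_def L2_def by (simp add: power2_eq_square)
          then show ?thesis using LL h False by simp
        next
          assume h: "R = 0 \<and> P \<noteq> 0"
          then have "L1 * L2 = (x * y) * P^2" unfolding L1_def L2_def by (simp add: power2_eq_square)
          then show ?thesis using LL h by simp
        qed
        then show ?thesis using \<open>u = 0\<close> False True unfolding K_def by blast
      next
        case Kn: False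
        have "L1 * L2 = 0" using kl Kn by simp
        then have "L1 = 0 \<and> L2 = 0" by (rule both[OF False Kn])
        then have L: "L1 = 0" "L2 = 0" by blast+
        then have c: "P = w * R \<or> P = - (w * R)" using sq xy0 by blast
        have Pn: "P \<noteq> 0"
        proof
          assume "P = 0"
          then have "R = 0" using c False by auto
          then show False using cas False \<open>P = 0\<close> by blast
        qed
        show ?thesis
        proof (cases "P = w * R")
          case True
          then have "x * P = y * P" using L(1) unfolding L1_def by (simp add: algebra_simps)
          then have "x = y" using Pn by simp
          then show ?thesis using \<open>u = 0\<close> False True unfolding P_def R_def by blast
        next
          case F2: False
          then have P2: "P = - (w * R)" using c by blast
          then have "x * P = - y * P" using L(1) unfolding L1_def by (simp add: algebra_simps)
          then have "x = - y" using Pn by (metis minus_mult_left mult_right_cancel)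
          then show ?thesis using \<open>u = 0\<close> False P2 unfolding P_def R_def by blast
        qed
      qed
    qed
  qed
qed

lemma sup_a:
  assumes "u = 0" "w = 0" "(x * chebH (Suc i) z w - y * w * chebH i z w) * (y * chebH (Suc i) z w - x * w * chebH i z w) = 0"
  shows "singPhi \<sigma> \<tau> kf i N x y u z w"
  using assms unfolding singPhi_def Phi_dx Phi_dy Phi_du Phi_dz Phi_dw unfolding Phi_alt
  by (simp add: mult.assoc)

lemma sup_b:
  assumes "u = 0" "Kf kf i z w = 0" "(x * chebH (Suc i) z w - y * w * chebH i z w) * (y * chebH (Suc i) z w - x * w * chebH i z w) = 0"
  shows "singPhi \<sigma> \<tau> kf i N x y u z w"
  using assms unfolding singPhi_def Phi_dx Phi_dy Phi_du Phi_dz Phi_dw unfolding Phi_alt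
  by (simp add: mult.assoc)

lemma sup_c:
  assumes "u = 0" "x * chebH (Suc i) z w - y * w * chebH i z w = 0" "y * chebH (Suc i) z w - x * w * chebH i z w = 0"
  shows "singPhi \<sigma> \<tau> kf i N x y u z w"
  using assms unfolding singPhi_def Phi_dx Phi_dy Phi_du Phi_dz Phi_dw unfolding Phi_alt
  by simp

lemma card_roots_rsquarefree:
  fixes p :: "complex poly"
  assumes "rsquarefree p"
  shows "card {z. poly p z = 0} = degree p"
proof -
  have p0: "p \<noteq> 0" using assms unfolding rsquarefree_def by blast
  have fin: "finite {z. poly p z = 0}" using poly_roots_finite[OF p0] .
  have "degree p = degree (smult (lead_coeff p) (\<Prod>z|poly p z = 0. [:-z, 1:]))"
    using complex_poly_decompose_rsquarefree[OF assms] by simp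
  also have "\<dots> = degree (\<Prod>z|poly p z = 0. [:-z, 1:])" using p0 by simp
  also have "\<dots> = (\<Sum>z|poly p z = 0. degree [:-z, 1:])"
    by (rule degree_prod_sum_eq) simp
  also have "\<dots> = card {z. poly p z = 0}" by simp
  finally show ?thesis by simp
qed

fun cp :: "nat \<Rightarrow> complex poly" where
  "cp 0 = 1"
| "cp (Suc 0) = [:0, 1:]"
| "cp (Suc (Suc n)) = [:0, 1:] * cp (Suc n) - cp n"

lemma poly_cp: "poly (cp n) z = chebH n z 1"
  by (induction n rule: cp.induct) auto

lemma degree_cp: "degree (cp n) = n \<and> lead_coeff (cp n) = 1"
proof (induction n rule: cp.induct)
  case (3 n)
  have nz: "cp (Suc n) \<noteq> 0" using 3 by auto
  have e: "[:0, 1:] * cp (Suc n) = pCons 0 (cp (Suc n))" by simp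
  have d1: "degree ([:0, 1:] * cp (Suc n)) = Suc (Suc n)"
    unfolding e using degree_pCons_eq[OF nz] 3 by simp
  have c1: "coeff (cp (Suc n)) (Suc n) = 1" using 3 by metis
  have l1: "lead_coeff ([:0, 1:] * cp (Suc n)) = 1"
    using d1 c1 unfolding e by simp
  have lt: "degree (- cp n) < degree ([:0, 1:] * cp (Suc n))" using d1 3 by simp
  have "cp (Suc (Suc n)) = [:0, 1:] * cp (Suc n) + - cp n" by simp
  then show ?case
    using degree_add_eq_left[OF lt] lead_coeff_add_le[of "- cp n" "[:0, 1:] * cp (Suc n)"] lt d1 l1
    by (metis add.commute)
qed auto

lemma pderiv_cp: "poly (pderiv (cp n)) z = chebHz n z 1"
proof -
  have f: "(\<lambda>t. chebH n t 1) = poly (cp n)" by (rule ext) (simp add: poly_cp)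
  have "((\<lambda>t. chebH n t 1) has_field_derivative chebHz n z 1) (at z)" by (rule chebH_dz)
  then have "(poly (cp n) has_field_derivative chebHz n z 1) (at z)" unfolding f .
  moreover have "(poly (cp n) has_field_derivative poly (pderiv (cp n)) z) (at z)"
    using poly_DERIV[of "cp n" z] by simp
  ultimately show ?thesis using DERIV_unique by blast
qed

lemma rsf_cp: "rsquarefree (cp n)"
  unfolding rsquarefree_roots
  using simple_root[of 1 n] by (simp add: poly_cp pderiv_cp)

lemma cp_double: "cp (2*k+2) = (cp (Suc k) - cp k) * (cp (Suc k) + cp k)"
proof -
  have h: "\<And>z. poly (cp (2*k+2)) z = chebH (Suc k) z 1 ^ 2 - 1^2 * chebH k z 1 ^ 2"
    by (simp only: poly_cp chebH_double)
  have "poly (cp (2*k+2)) = poly ((cp (Suc k) - cp k) * (cp (Suc k) + cp k))"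
    by (rule ext) (simp only: h, simp add: poly_cp algebra_simps power2_eq_square)
  then show ?thesis by (simp add: poly_eq_poly_eq_iff)
qed

lemma rsf_factor:
  fixes p q :: "complex poly"
  assumes "rsquarefree (p * q)" shows "rsquarefree p"
  using assms unfolding rsquarefree_roots by (auto simp: pderiv_mult)

lemma degree_cp_pm: "degree (cp (Suc k) - cp k) = Suc k" "degree (cp (Suc k) + cp k) = Suc k"
proof -
  have lt: "degree (cp k) < degree (cp (Suc k))" using degree_cp by simp
  show "degree (cp (Suc k) + cp k) = Suc k" using degree_add_eq_left[OF lt] degree_cp by simp
  have lt2: "degree (- cp k) < degree (cp (Suc k))" using lt by simp
  show "degree (cp (Suc k) - cp k) = Suc k" using degree_add_eq_left[OF lt2] degree_cp by simp
qed

lemma count_roots: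
  "card {z. chebN k z = 0} = k" "finite {z. chebN k z = 0}"
  "card {z. chebN (Suc k) z - chebN k z = 0} = Suc k" "finite {z. chebN (Suc k) z - chebN k z = 0}"
  "card {z. chebN (Suc k) z + chebN k z = 0} = Suc k" "finite {z. chebN (Suc k) z + chebN k z = 0}"
proof -
  have e1: "{z. chebN k z = 0} = {z. poly (cp k) z = 0}" by (simp add: poly_cp chebN_H)
  have e2: "{z. chebN (Suc k) z - chebN k z = 0} = {z. poly (cp (Suc k) - cp k) z = 0}" by (simp add: poly_cp chebN_H)
  have e3: "{z. chebN (Suc k) z + chebN k z = 0} = {z. poly (cp (Suc k) + cp k) z = 0}" by (simp add: poly_cp chebN_H)
  have r: "rsquarefree ((cp (Suc k) - cp k) * (cp (Suc k) + cp k))" using rsf_cp[of "2*k+2"] cp_double by simp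
  have r2: "rsquarefree (cp (Suc k) - cp k)" using rsf_factor[OF r] .
  have r3: "rsquarefree (cp (Suc k) + cp k)" using rsf_factor[of _ "cp (Suc k) - cp k"] r by (simp add: mult.commute)
  show "card {z. chebN k z = 0} = k" unfolding e1 using card_roots_rsquarefree[OF rsf_cp] degree_cp by simp
  show "card {z. chebN (Suc k) z - chebN k z = 0} = Suc k" unfolding e2 using card_roots_rsquarefree[OF r2] degree_cp_pm by simp
  show "card {z. chebN (Suc k) z + chebN k z = 0} = Suc k" unfolding e3 using card_roots_rsquarefree[OF r3] degree_cp_pm by simp
  show "finite {z. chebN k z = 0}" unfolding e1 using rsf_cp[of k] poly_roots_finite unfolding rsquarefree_def by blast
  show "finite {z. chebN (Suc k) z - chebN k z = 0}" unfolding e2 using r2 poly_roots_finite unfolding rsquarefree_def by blast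
  show "finite {z. chebN (Suc k) z + chebN k z = 0}" unfolding e3 using r3 poly_roots_finite unfolding rsquarefree_def by blast
qed

lemma proj_scale:
  assumes "a \<noteq> 0" "b \<noteq> 0"
  shows "proj_pt (a*x, a*y, a*u) (b*z, b*w) = proj_pt (x, y, u) (z, w)"
proof -
  have "{((c*(a*x), c*(a*y), c*(a*u)), (d*(b*z), d*(b*w))) | c d. c \<noteq> 0 \<and> d \<noteq> 0}
      = {((c*x, c*y, c*u), (d*z, d*w)) | c d. c \<noteq> 0 \<and> d \<noteq> 0}"
  proof (intro set_eqI iffI)
    fix X assume "X \<in> {((c*(a*x), c*(a*y), c*(a*u)), (d*(b*z), d*(b*w))) | c d. c \<noteq> 0 \<and> d \<noteq> 0}"
    then obtain c d where "c \<noteq> 0" "d \<noteq> 0" "X = ((c*(a*x), c*(a*y), c*(a*u)), (d*(b*z), d*(b*w)))" by blast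
    then show "X \<in> {((c*x, c*y, c*u), (d*z, d*w)) | c d. c \<noteq> 0 \<and> d \<noteq> 0}"
      using assms by (intro CollectI exI[of _ "c*a"] exI[of _ "d*b"]) (simp add: mult.assoc)
  next
    fix X assume "X \<in> {((c*x, c*y, c*u), (d*z, d*w)) | c d. c \<noteq> 0 \<and> d \<noteq> 0}"
    then obtain c d where "c \<noteq> 0" "d \<noteq> 0" "X = ((c*x, c*y, c*u), (d*z, d*w))" by blast
    then show "X \<in> {((c*(a*x), c*(a*y), c*(a*u)), (d*(b*z), d*(b*w))) | c d. c \<noteq> 0 \<and> d \<noteq> 0}"
      using assms by (intro CollectI exI[of _ "c/a"] exI[of _ "d/b"]) (simp add: mult.assoc)
  qed
  then show ?thesis unfolding proj_pt_def by simp
qed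

lemma proj_pt_eqD:
  assumes "proj_pt (x, y, u) (z, w) = proj_pt (x', y', u') (z', w')"
  shows "\<exists>a b. a \<noteq> 0 \<and> b \<noteq> 0 \<and> x = a*x' \<and> y = a*y' \<and> u = a*u' \<and> z = b*z' \<and> w = b*w'"
proof -
  have "((x, y, u), (z, w)) \<in> proj_pt (x, y, u) (z, w)" unfolding proj_pt_def
    by (auto intro!: exI[of _ 1])
  then have "((x, y, u), (z, w)) \<in> proj_pt (x', y', u') (z', w')" using assms by simp
  then show ?thesis unfolding proj_pt_def by auto
qed

lemma chebH_dehom: "w \<noteq> 0 \<Longrightarrow> chebH n z w = w^n * chebH n (z/w) 1"
  using chebH_homog[of n w "z/w" 1] by simp

lemma Kf_dehom: "w \<noteq> 0 \<Longrightarrow> Kf kf i z w = 0 \<longleftrightarrow> Kf kf i (z/w) 1 = 0"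
  unfolding Kf_def by (cases kf) (auto simp: chebH_dehom[of w])

lemma PR_dehom:
  assumes "w \<noteq> 0"
  shows "chebH (Suc i) z w = w * chebH i z w \<longleftrightarrow> chebH (Suc i) (z/w) 1 = chebH i (z/w) 1"
    and "chebH (Suc i) z w = - (w * chebH i z w) \<longleftrightarrow> chebH (Suc i) (z/w) 1 = - chebH i (z/w) 1"
proof -
  have e: "chebH (Suc i) z w = w^(Suc i) * chebH (Suc i) (z/w) 1" "w * chebH i z w = w^(Suc i) * chebH i (z/w) 1"
    using chebH_dehom[OF assms] by (auto simp: mult.assoc)
  have nz: "w^(Suc i) \<noteq> 0" using assms by simp
  show "chebH (Suc i) z w = w * chebH i z w \<longleftrightarrow> chebH (Suc i) (z/w) 1 = chebH i (z/w) 1"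
    unfolding e using nz by simp
  show "chebH (Suc i) z w = - (w * chebH i z w) \<longleftrightarrow> chebH (Suc i) (z/w) 1 = - chebH i (z/w) 1"
    unfolding e using nz by (metis mult_minus_right mult_cancel_left)
qed

lemma main_set:
  assumes st: "\<sigma> \<noteq> 0" "\<tau> \<noteq> 0"
  and Nh: "\<And>z w. w \<noteq> 0 \<Longrightarrow> chebH N z w = 0 \<Longrightarrow> Kf kf i z w \<noteq> 0 \<and>
              chebH (Suc i) z w \<noteq> w * chebH i z w \<and> chebH (Suc i) z w \<noteq> - (w * chebH i z w)"
  and sing_iff: "\<And>x y u z w. is_singular m x y u z w \<longleftrightarrow> singPhi \<sigma> \<tau> kf i N x y u z w"
  and cK: "\<And>z. chebS (m - 1) z = 0 \<longleftrightarrow> Kf kf i z 1 = 0"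
  and cD: "\<And>z. chebS m z - chebS (m - 1) z = 0 \<longleftrightarrow> chebH (Suc i) z 1 = chebH i z 1"
  and cE: "\<And>z. chebS m z + chebS (m - 1) z = 0 \<longleftrightarrow> chebH (Suc i) z 1 = - chebH i z 1"
  shows "singular_points m =
           {proj_pt (1, 0, 0) (1, 0), proj_pt (0, 1, 0) (1, 0)}
           \<union> {proj_pt (1, 0, 0) (z, 1) | z. chebS (m - 1) z = 0}
           \<union> {proj_pt (0, 1, 0) (z, 1) | z. chebS (m - 1) z = 0}
           \<union> {proj_pt (1, 1, 0) (z, 1) | z. chebS m z - chebS (m - 1) z = 0}
           \<union> {proj_pt (1, -1, 0) (z, 1) | z. chebS m z + chebS (m - 1) z = 0}"
  (is "?L = ?T0 \<union> ?T1 \<union> ?T2 \<union> ?T3 \<union> ?T4")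
proof (intro equalityI subsetI)
  fix X assume "X \<in> ?L"
  then obtain x y u z w where X: "X = proj_pt (x, y, u) (z, w)" and nz: "(x, y, u) \<noteq> (0, 0, 0)" "(z, w) \<noteq> (0, 0)"
    and sg: "is_singular m x y u z w"
    unfolding singular_points_def by blast
  have sg': "singPhi \<sigma> \<tau> kf i N x y u z w" using sg sing_iff by blast
  note c = core_sub[OF st Nh nz sg']
  then have u0: "u = 0" by blast
  from c consider (A) "w = 0" "x = 0" | (A') "w = 0" "y = 0"
    | (B) "w \<noteq> 0" "Kf kf i z w = 0" "x = 0" | (B') "w \<noteq> 0" "Kf kf i z w = 0" "y = 0"
    | (C) "w \<noteq> 0" "chebH (Suc i) z w = w * chebH i z w" "x = y"
    | (D) "w \<noteq> 0" "chebH (Suc i) z w = - (w * chebH i z w)" "x = - y"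
    by blast
  then show "X \<in> ?T0 \<union> ?T1 \<union> ?T2 \<union> ?T3 \<union> ?T4"
  proof cases
    case A
    then have y0: "y \<noteq> 0" "z \<noteq> 0" using nz u0 by auto
    have "X = proj_pt (y*0, y*1, y*0) (z*1, z*0)" using X A u0 by simp
    also have "\<dots> = proj_pt (0, 1, 0) (1, 0)" by (rule proj_scale) (use y0 in auto)
    finally show ?thesis by blast
  next
    case A'
    then have y0: "x \<noteq> 0" "z \<noteq> 0" using nz u0 by auto
    have "X = proj_pt (x*1, x*0, x*0) (z*1, z*0)" using X A' u0 by simp
    also have "\<dots> = proj_pt (1, 0, 0) (1, 0)" by (rule proj_scale) (use y0 in auto)
    finally show ?thesis by blast
  next
    case B
    then have y0: "y \<noteq> 0" using nz u0 by auto
    have "X = proj_pt (y*0, y*1, y*0) (w*(z/w), w*1)" using X B u0 by simp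
    also have "\<dots> = proj_pt (0, 1, 0) (z/w, 1)" by (rule proj_scale) (use y0 B in auto)
    finally have "X = proj_pt (0, 1, 0) (z/w, 1)" .
    moreover have "chebS (m - 1) (z/w) = 0" using cK Kf_dehom B by blast
    ultimately show ?thesis by blast
  next
    case B'
    then have y0: "x \<noteq> 0" using nz u0 by auto
    have "X = proj_pt (x*1, x*0, x*0) (w*(z/w), w*1)" using X B' u0 by simp
    also have "\<dots> = proj_pt (1, 0, 0) (z/w, 1)" by (rule proj_scale) (use y0 B' in auto)
    finally have "X = proj_pt (1, 0, 0) (z/w, 1)" .
    moreover have "chebS (m - 1) (z/w) = 0" using cK Kf_dehom B' by blast
    ultimately show ?thesis by blast
  next
    case C
    then have y0: "x \<noteq> 0" using nz u0 by auto
    have "X = proj_pt (x*1, x*1, x*0) (w*(z/w), w*1)" using X C u0 by simp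
    also have "\<dots> = proj_pt (1, 1, 0) (z/w, 1)" by (rule proj_scale) (use y0 C in auto)
    finally have "X = proj_pt (1, 1, 0) (z/w, 1)" .
    moreover have "chebS m (z/w) - chebS (m - 1) (z/w) = 0" using cD PR_dehom(1) C by blast
    ultimately show ?thesis by blast
  next
    case D
    then have y0: "x \<noteq> 0" using nz u0 by auto
    have "X = proj_pt (x*1, x*(-1), x*0) (w*(z/w), w*1)" using X D u0 by simp
    also have "\<dots> = proj_pt (1, -1, 0) (z/w, 1)" by (rule proj_scale) (use y0 D in auto)
    finally have "X = proj_pt (1, -1, 0) (z/w, 1)" .
    moreover have "chebS m (z/w) + chebS (m - 1) (z/w) = 0" using cE PR_dehom(2) D by blast
    ultimately show ?thesis by blast
  qed
next
  fix X assume "X \<in> ?T0 \<union> ?T1 \<union> ?T2 \<union> ?T3 \<union> ?T4"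
  have mem: "proj_pt (x, y, u) (z, w) \<in> ?L" if "(x, y, u) \<noteq> (0, 0, 0)" "(z, w) \<noteq> (0, 0)"
    "singPhi \<sigma> \<tau> kf i N x y u z w" for x y u z w
    unfolding singular_points_def using that sing_iff by blast
  have KPR: "Kf kf i z 1 = 0 \<Longrightarrow> chebH (Suc i) z 1 * chebH i z 1 = 0" for z
    using Kf_cases[of kf i z 1] by auto
  show "X \<in> ?L"
  proof -
    consider "X \<in> ?T0" | "X \<in> ?T1" | "X \<in> ?T2" | "X \<in> ?T3" | "X \<in> ?T4"
      using \<open>X \<in> ?T0 \<union> ?T1 \<union> ?T2 \<union> ?T3 \<union> ?T4\<close> by blast
    then show ?thesis
    proof cases
      case 1
      then consider "X = proj_pt (1, 0, 0) (1, 0)" | "X = proj_pt (0, 1, 0) (1, 0)" by blast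
      then show ?thesis
      proof cases
        case 1 then show ?thesis using mem[of 1 0 0 1 0] sup_a[where u=0 and w=0 and x=1 and y=0 and z=1 and i=i and \<sigma>=\<sigma> and \<tau>=\<tau> and kf=kf and N=N] by simp
      next
        case 2 then show ?thesis using mem[of 0 1 0 1 0] sup_a[where u=0 and w=0 and x=0 and y=1 and z=1 and i=i and \<sigma>=\<sigma> and \<tau>=\<tau> and kf=kf and N=N] by simp
      qed
    next
      case 2
      then obtain z where X: "X = proj_pt (1, 0, 0) (z, 1)" "chebS (m - 1) z = 0" by blast
      then have "Kf kf i z 1 = 0" using cK by blast
      then show ?thesis using X mem[of 1 0 0 z 1] sup_b[where u=0 and w=1 and x=1 and y=0 and z=z and i=i and \<sigma>=\<sigma> and \<tau>=\<tau> and kf=kf and N=N] KPR[of z] by simp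
    next
      case 3
      then obtain z where X: "X = proj_pt (0, 1, 0) (z, 1)" "chebS (m - 1) z = 0" by blast
      then have "Kf kf i z 1 = 0" using cK by blast
      then show ?thesis using X mem[of 0 1 0 z 1] sup_b[where u=0 and w=1 and x=0 and y=1 and z=z and i=i and \<sigma>=\<sigma> and \<tau>=\<tau> and kf=kf and N=N] KPR[of z] by (simp add: mult.commute)
    next
      case 4
      then obtain z where X: "X = proj_pt (1, 1, 0) (z, 1)" "chebS m z - chebS (m - 1) z = 0" by blast
      then have "chebH (Suc i) z 1 = chebH i z 1" using cD by blast
      then show ?thesis using X mem[of 1 1 0 z 1] sup_c[where u=0 and w=1 and x=1 and y=1 and z=z and i=i and \<sigma>=\<sigma> and \<tau>=\<tau> and kf=kf and N=N] by simp
    next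
      case 5
      then obtain z where X: "X = proj_pt (1, -1, 0) (z, 1)" "chebS m z + chebS (m - 1) z = 0" by blast
      then have "chebH (Suc i) z 1 = - chebH i z 1" using cE by blast
      then show ?thesis using X mem[of 1 "-1" 0 z 1] sup_c[where u=0 and w=1 and x=1 and y="-1" and z=z and i=i and \<sigma>=\<sigma> and \<tau>=\<tau> and kf=kf and N=N] by simp
    qed
  qed
qed

lemma pe:
  assumes "proj_pt (x, y, u) (z, w) = proj_pt (x', y', u') (z', w')"
  shows "(x = 0 \<longleftrightarrow> x' = 0) \<and> (y = 0 \<longleftrightarrow> y' = 0) \<and> (w = 0 \<longleftrightarrow> w' = 0) \<and> x * y' = x' * y \<and> z * w' = z' * w"
  using proj_pt_eqD[OF assms] by auto

lemma ne_w: "proj_pt (x, y, u) (z, 0) \<noteq> proj_pt (x', y', u') (z', 1)"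
proof
  assume "proj_pt (x, y, u) (z, 0) = proj_pt (x', y', u') (z', 1)"
  from pe[OF this] show False by simp
qed

lemma ne_x: "proj_pt (0, y, u) (z, w) \<noteq> proj_pt (1, y', u') (z', w')"
proof
  assume "proj_pt (0, y, u) (z, w) = proj_pt (1, y', u') (z', w')"
  from pe[OF this] show False by simp
qed

lemma ne_y: "y' \<noteq> 0 \<Longrightarrow> proj_pt (x, 0, u) (z, w) \<noteq> proj_pt (x', y', u') (z', w')"
proof
  assume "y' \<noteq> 0" "proj_pt (x, 0, u) (z, w) = proj_pt (x', y', u') (z', w')"
  from pe[OF this(2)] this(1) show False by simp
qed

lemma ne_34: "proj_pt (1, 1, 0) (z, w) \<noteq> proj_pt (1, -1, 0) (z', w')"
proof
  assume "proj_pt (1, 1, 0) (z, w) = proj_pt (1, -1, 0) (z', w')"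
  from pe[OF this] show False by simp
qed

lemma inj_pp: "inj_on (\<lambda>z. proj_pt (a, b, c) (z, 1)) S"
proof (rule inj_onI)
  fix z z' assume "z \<in> S" "z' \<in> S" "proj_pt (a, b, c) (z, 1) = proj_pt (a, b, c) (z', 1)"
  from pe[OF this(3)] show "z = z'" by simp
qed

lemma card_main:
  fixes S1 S3 S4 :: "complex set"
  assumes f: "finite S1" "finite S3" "finite S4"
  shows "card ({proj_pt (1, 0, 0) (1, 0), proj_pt (0, 1, 0) (1, 0)}
           \<union> {proj_pt (1, 0, 0) (z, 1) | z. z \<in> S1}
           \<union> {proj_pt (0, 1, 0) (z, 1) | z. z \<in> S1}
           \<union> {proj_pt (1, 1, 0) (z, 1) | z. z \<in> S3}
           \<union> {proj_pt (1, -1, 0) (z, 1) | z. z \<in> S4}) = 2 + card S1 + card S1 + card S3 + card S4"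
proof -
  define T0 where "T0 = {proj_pt (1, 0, 0) (1, 0), proj_pt (0, 1, 0) (1::complex, 0::complex)}"
  define T1 where "T1 = (\<lambda>z. proj_pt (1, 0, 0) (z, 1)) ` S1"
  define T2 where "T2 = (\<lambda>z. proj_pt (0, 1, 0) (z, 1)) ` S1"
  define T3 where "T3 = (\<lambda>z. proj_pt (1, 1, 0) (z, 1)) ` S3"
  define T4 where "T4 = (\<lambda>z. proj_pt (1, -1, 0) (z, 1)) ` S4"
  have eq: "{proj_pt (1, 0, 0) (1, 0), proj_pt (0, 1, 0) (1, 0)}
           \<union> {proj_pt (1, 0, 0) (z, 1) | z. z \<in> S1}
           \<union> {proj_pt (0, 1, 0) (z, 1) | z. z \<in> S1}
           \<union> {proj_pt (1, 1, 0) (z, 1) | z. z \<in> S3}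
           \<union> {proj_pt (1, -1, 0) (z, 1) | z. z \<in> S4} = T0 \<union> T1 \<union> T2 \<union> T3 \<union> T4"
    unfolding T0_def T1_def T2_def T3_def T4_def by blast
  have c0: "card T0 = 2"
    unfolding T0_def using ne_x[of 1 0 1 0 0 0 1 0] by (simp add: eq_commute)
  have c1: "card T1 = card S1" unfolding T1_def by (rule card_image[OF inj_pp])
  have c2: "card T2 = card S1" unfolding T2_def by (rule card_image[OF inj_pp])
  have c3: "card T3 = card S3" unfolding T3_def by (rule card_image[OF inj_pp])
  have c4: "card T4 = card S4" unfolding T4_def by (rule card_image[OF inj_pp])
  have fT: "finite T0" "finite T1" "finite T2" "finite T3" "finite T4"
    unfolding T0_def T1_def T2_def T3_def T4_def using f by auto
  note nes = ne_w ne_x ne_y[of 1, simplified] ne_y[of "-1", simplified] ne_34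
    ne_w[THEN not_sym] ne_x[THEN not_sym] ne_y[of 1, simplified, THEN not_sym] ne_y[of "-1", simplified, THEN not_sym] ne_34[THEN not_sym]
  have d01: "T0 \<inter> T1 = {}" unfolding T0_def T1_def by (auto simp: nes)
  have d012: "(T0 \<union> T1) \<inter> T2 = {}" unfolding T0_def T1_def T2_def by (auto simp: nes)
  have d0123: "(T0 \<union> T1 \<union> T2) \<inter> T3 = {}" unfolding T0_def T1_def T2_def T3_def by (auto simp: nes)
  have d01234: "(T0 \<union> T1 \<union> T2 \<union> T3) \<inter> T4 = {}" unfolding T0_def T1_def T2_def T3_def T4_def
    by (auto simp: nes)
  have "card (T0 \<union> T1 \<union> T2 \<union> T3 \<union> T4) = card T0 + card T1 + card T2 + card T3 + card T4"
    using fT d01 d012 d0123 d01234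
    by (simp add: card_Un_disjoint)
  then show ?thesis unfolding eq c0 c1 c2 c3 c4 .
qed

lemma pos_alg:
  fixes P R V H w z :: complex
  assumes "V = P^2 - z*P*R + w^2*R^2" "H = P^3 - 3*w^2*P*R^2 + z*w^2*R^3"
  shows "R = 0 \<Longrightarrow> H = P * V" "P = w * R \<Longrightarrow> H = - (w * R * V)" "P = - (w * R) \<Longrightarrow> H = w * R * V"
  using assms apply algebra using assms apply algebra using assms apply algebra done

lemma neg_alg:
  fixes P R V H w z :: complex
  assumes "V = P^2 - z*P*R + w^2*R^2" "H = z * P^3 - 3*w^2*R*P^2 + w^4*R^3"
  shows "P = 0 \<Longrightarrow> H = w^2 * R * V" "P = w * R \<Longrightarrow> H = - (w^2 * R * V)" "P = - (w * R) \<Longrightarrow> H = - (w^2 * R * V)"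
  using assms apply algebra using assms apply algebra using assms apply algebra done

lemma Nh_pos:
  assumes "w \<noteq> 0" "chebH (3*k+3) z w = 0"
  shows "Kf False k z w \<noteq> 0 \<and> chebH (Suc k) z w \<noteq> w * chebH k z w \<and> chebH (Suc k) z w \<noteq> - (w * chebH k z w)"
proof -
  define P where "P = chebH (Suc k) z w"
  define R where "R = chebH k z w"
  define V where "V = w ^ (2 * Suc k)"
  have V: "V = P^2 - z*P*R + w^2*R^2" using cassini[of k z w] unfolding P_def R_def V_def by simp
  have H: "chebH (3*k+3) z w = P^3 - 3*w^2*P*R^2 + z*w^2*R^3" using chebH_triple_pos[of k z w] unfolding P_def R_def by simp
  have Vn: "V \<noteq> 0" using assms(1) unfolding V_def by simp
  have cas: "\<not> (P = 0 \<and> R = 0)" using cassini_nz[OF assms(1)] unfolding P_def R_def by blast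
  have "R \<noteq> 0"
  proof
    assume "R = 0"
    then have "chebH (3*k+3) z w = P * V" by (rule pos_alg(1)[OF V H])
    then show False using assms(2) Vn cas \<open>R = 0\<close> by simp
  qed
  moreover have "P \<noteq> w * R"
  proof
    assume h: "P = w * R"
    then have "chebH (3*k+3) z w = - (w * R * V)" by (rule pos_alg(2)[OF V H])
    then show False using assms Vn \<open>R \<noteq> 0\<close> by simp
  qed
  moreover have "P \<noteq> - (w * R)"
  proof
    assume h: "P = - (w * R)"
    then have "chebH (3*k+3) z w = w * R * V" by (rule pos_alg(3)[OF V H])
    then show False using assms Vn \<open>R \<noteq> 0\<close> by simp
  qed
  ultimately show ?thesis unfolding Kf_def P_def R_def by simp
qed

lemma Nh_neg:
  assumes "w \<noteq> 0" "chebH (3*j+4) z w = 0"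
  shows "Kf True j z w \<noteq> 0 \<and> chebH (Suc j) z w \<noteq> w * chebH j z w \<and> chebH (Suc j) z w \<noteq> - (w * chebH j z w)"
proof -
  define P where "P = chebH (Suc j) z w"
  define R where "R = chebH j z w"
  define V where "V = w ^ (2 * Suc j)"
  have V: "V = P^2 - z*P*R + w^2*R^2" using cassini[of j z w] unfolding P_def R_def V_def by simp
  have H: "chebH (3*j+4) z w = z * P^3 - 3*w^2*R*P^2 + w^4*R^3" using chebH_triple_neg[of j z w] unfolding P_def R_def by simp
  have Vn: "V \<noteq> 0" using assms(1) unfolding V_def by simp
  have cas: "\<not> (P = 0 \<and> R = 0)" using cassini_nz[OF assms(1)] unfolding P_def R_def by blast
  have "P \<noteq> 0"
  proof
    assume "P = 0"
    then have "chebH (3*j+4) z w = w^2 * R * V" by (rule neg_alg(1)[OF V H])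
    then show False using assms Vn cas \<open>P = 0\<close> by simp
  qed
  have Rn: "R \<noteq> 0" if "P = w * R \<or> P = - (w * R)" using that \<open>P \<noteq> 0\<close> by auto
  have "P \<noteq> w * R"
  proof
    assume h: "P = w * R"
    then have "chebH (3*j+4) z w = - (w^2 * R * V)" by (rule neg_alg(2)[OF V H])
    then show False using assms Vn Rn h by simp
  qed
  moreover have "P \<noteq> - (w * R)"
  proof
    assume h: "P = - (w * R)"
    then have "chebH (3*j+4) z w = - (w^2 * R * V)" by (rule neg_alg(3)[OF V H])
    then show False using assms Vn Rn h by simp
  qed
  ultimately show ?thesis using \<open>P \<noteq> 0\<close> unfolding Kf_def P_def R_def by simp
qed

theorem proposition7p5:
  fixes m :: int
  assumes "m \<ge> 1 \<or> m \<le> -2"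
  shows "singular_points m =
           {proj_pt (1, 0, 0) (1, 0), proj_pt (0, 1, 0) (1, 0)}
           \<union> {proj_pt (1, 0, 0) (z, 1) | z. chebS (m - 1) z = 0}
           \<union> {proj_pt (0, 1, 0) (z, 1) | z. chebS (m - 1) z = 0}
           \<union> {proj_pt (1, 1, 0) (z, 1) | z. chebS m z - chebS (m - 1) z = 0}
           \<union> {proj_pt (1, -1, 0) (z, 1) | z. chebS m z + chebS (m - 1) z = 0} \<and>
         card (singular_points m) = (if m \<ge> 1 then nat (4 * m) else nat (-(2 + 4 * m)))"
proof -
  let ?R = "{proj_pt (1, 0, 0) (1, 0), proj_pt (0, 1, 0) (1, 0)}
           \<union> {proj_pt (1, 0, 0) (z, 1) | z. chebS (m - 1) z = 0}
           \<union> {proj_pt (0, 1, 0) (z, 1) | z. chebS (m - 1) z = 0}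
           \<union> {proj_pt (1, 1, 0) (z, 1) | z. chebS m z - chebS (m - 1) z = 0}
           \<union> {proj_pt (1, -1, 0) (z, 1) | z. chebS m z + chebS (m - 1) z = 0}"
  have cardR: "card ?R = 2 + card {z. chebS (m - 1) z = 0} + card {z. chebS (m - 1) z = 0}
      + card {z. chebS m z - chebS (m - 1) z = 0} + card {z. chebS m z + chebS (m - 1) z = 0}"
    if "finite {z. chebS (m - 1) z = 0}" "finite {z. chebS m z - chebS (m - 1) z = 0}"
       "finite {z. chebS m z + chebS (m - 1) z = 0}"
    using card_main[OF that] by simp
  from assms consider (pos) "1 \<le> m" | (neg) "m \<le> -2" by linarith
  then show ?thesis
  proof cases
    case pos
    define k where "k = nat m - 1"
    have mk: "m = int (Suc k)" using pos k_def by simp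
    have cS1: "chebS (m - 1) z = chebN k z" for z
    proof -
      have "0 \<le> m - 1" "nat (m - 1) = k" using mk by simp_all
      then show ?thesis unfolding chebS_def by simp
    qed
    have cS: "chebS m z = chebN (Suc k) z" for z
    proof -
      have "0 \<le> m" "nat m = Suc k" using mk by simp_all
      then show ?thesis unfolding chebS_def by simp
    qed
    have feq: "Fpoly m = Phi 1 (-1) False k (3 * k + 3)"
      by (intro ext) (rule Fpoly_pos[OF pos k_def])
    have eq: "singular_points m = ?R"
    proof (rule main_set)
      show "(1::complex) \<noteq> 0" "(-1::complex) \<noteq> 0" by simp_all
      show "\<And>z w. w \<noteq> 0 \<Longrightarrow> chebH (3 * k + 3) z w = 0 \<Longrightarrow> Kf False k z w \<noteq> 0 \<and>
              chebH (Suc k) z w \<noteq> w * chebH k z w \<and> chebH (Suc k) z w \<noteq> - (w * chebH k z w)"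
        by (rule Nh_pos)
      show "\<And>x y u z w. is_singular m x y u z w \<longleftrightarrow> singPhi 1 (-1) False k (3 * k + 3) x y u z w"
        unfolding is_singular_def singPhi_def feq ..
      show "\<And>z. chebS (m - 1) z = 0 \<longleftrightarrow> Kf False k z 1 = 0"
        unfolding cS1 Kf_def chebN_H by simp
      show "\<And>z. chebS m z - chebS (m - 1) z = 0 \<longleftrightarrow> chebH (Suc k) z 1 = chebH k z 1"
        unfolding cS1 cS chebN_H by simp
      show "\<And>z. chebS m z + chebS (m - 1) z = 0 \<longleftrightarrow> chebH (Suc k) z 1 = - chebH k z 1"
        unfolding cS1 cS chebN_H by (simp add: add_eq_0_iff2)
    qed
    have s1: "{z. chebS (m - 1) z = 0} = {z. chebN k z = 0}" using cS1 by simp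
    have s3: "{z. chebS m z - chebS (m - 1) z = 0} = {z. chebN (Suc k) z - chebN k z = 0}" using cS1 cS by simp
    have s4: "{z. chebS m z + chebS (m - 1) z = 0} = {z. chebN (Suc k) z + chebN k z = 0}" using cS1 cS by simp
    have "card (singular_points m) = 2 + k + k + Suc k + Suc k"
      unfolding eq using cardR count_roots[of k] unfolding s1 s3 s4 by simp
    then have "card (singular_points m) = nat (4 * m)" using mk by simp
    then show ?thesis using eq pos by simp
  next
    case neg
    define j where "j = nat (-m) - 2"
    have mj: "m = - int (j + 2)" using neg j_def by simp
    have cS1: "chebS (m - 1) z = - chebN (Suc j) z" for z
    proof -
      have "\<not> 0 \<le> m - 1" "m - 1 \<noteq> -1" "nat (- (m - 1) - 2) = Suc j" using mj by simp_all
      then show ?thesis unfolding chebS_def by simp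
    qed
    have cS: "chebS m z = - chebN j z" for z
    proof -
      have "\<not> 0 \<le> m" "m \<noteq> -1" "nat (- m - 2) = j" using mj by simp_all
      then show ?thesis unfolding chebS_def by simp
    qed
    have feq: "Fpoly m = Phi (-1) 1 True j (3 * j + 4)"
      by (intro ext) (rule Fpoly_neg[OF neg j_def])
    have eq: "singular_points m = ?R"
    proof (rule main_set)
      show "(-1::complex) \<noteq> 0" "(1::complex) \<noteq> 0" by simp_all
      show "\<And>z w. w \<noteq> 0 \<Longrightarrow> chebH (3 * j + 4) z w = 0 \<Longrightarrow> Kf True j z w \<noteq> 0 \<and>
              chebH (Suc j) z w \<noteq> w * chebH j z w \<and> chebH (Suc j) z w \<noteq> - (w * chebH j z w)"
        by (rule Nh_neg)
      show "\<And>x y u z w. is_singular m x y u z w \<longleftrightarrow> singPhi (-1) 1 True j (3 * j + 4) x y u z w"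
        unfolding is_singular_def singPhi_def feq ..
      show "\<And>z. chebS (m - 1) z = 0 \<longleftrightarrow> Kf True j z 1 = 0"
        unfolding cS1 Kf_def chebN_H by simp
      show "\<And>z. chebS m z - chebS (m - 1) z = 0 \<longleftrightarrow> chebH (Suc j) z 1 = chebH j z 1"
        unfolding cS1 cS chebN_H by (simp add: algebra_simps eq_neg_iff_add_eq_0 add_eq_0_iff2)
      show "\<And>z. chebS m z + chebS (m - 1) z = 0 \<longleftrightarrow> chebH (Suc j) z 1 = - chebH j z 1"
        unfolding cS1 cS chebN_H by (simp add: algebra_simps eq_neg_iff_add_eq_0) (auto simp: add_eq_0_iff)
    qed
    have s1: "{z. chebS (m - 1) z = 0} = {z. chebN (Suc j) z = 0}" using cS1 by simp
    have s3: "{z. chebS m z - chebS (m - 1) z = 0} = {z. chebN (Suc j) z - chebN j z = 0}"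
      using cS1 cS by (simp add: algebra_simps)
    have s4: "{z. chebS m z + chebS (m - 1) z = 0} = {z. chebN (Suc j) z + chebN j z = 0}"
      unfolding cS1 cS by (metis add.commute minus_add_distrib neg_equal_0_iff_equal)
    have "card (singular_points m) = 2 + Suc j + Suc j + Suc j + Suc j"
      unfolding eq using cardR count_roots[of "Suc j"] count_roots[of j] unfolding s1 s3 s4 by simp
    then have "card (singular_points m) = nat (-(2 + 4 * m))" using mj by simp
    then show ?thesis using eq neg by simp
  qed
qed

end
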